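(* Let $\tau\subseteq\sigma$ be two topologies on a set $X$. If $(X,\tau,\mathcal{HK}_\tau)$ is a $T_{\mathcal{HK}_\tau}$-space, then $(X,\sigma,\mathcal{HK}_\sigma)$ is a $T_{\mathcal{HK}_\sigma}$-space.
   Context: For a topology $\rho$ on $X$, $\mathcal{HK}_\rho$ denotes the ideal of $\rho$-hereditarily compact subsets of $X$, i.e. sets all of whose subsets are $\rho$-compact. For an ideal $\mathcal{I}$, $(X,\rho,\mathcal{I})$ is a $T_{\mathcal{I}}$-space if for every $I\in\mathcal{I}$ and every $x\in X\setminus I$ there is a set $A_x$ with $x\in A_x$, $A_x\cap I=\emptyset$, and $A_x$ $\rho$-open or $\rho$-closed. *)

theory Defs
  imports "HOL-Analysis.Analysis"
begin

definition HK :: "'a topology \<Rightarrow> 'a set set" where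
  "HK T = {A. \<forall>B. B \<subseteq> A \<longrightarrow> compactin T B}"

definition T_ideal_space :: "'a topology \<Rightarrow> 'a set set \<Rightarrow> bool" where
  "T_ideal_space T \<I> \<longleftrightarrow>
     (\<forall>I\<in>\<I>. \<forall>x\<in>topspace T - I.
        \<exists>A. x \<in> A \<and> A \<inter> I = {} \<and> (openin T A \<or> closedin T A))"

end

theory Submission
  imports Defs
begin

theorem mainTheorem5:
  fixes \<tau> \<sigma> :: "'a topology"
  assumes "topspace \<tau> = topspace \<sigma>"
    and "\<And>U. openin \<tau> U \<Longrightarrow> openin \<sigma> U"
    and "T_ideal_space \<tau> (HK \<tau>)"
  shows "T_ideal_space \<sigma> (HK \<sigma>)"
proof -
  have cm: "continuous_map \<sigma> \<tau> id"
  proof (unfold continuous_map_def, intro conjI allI impI)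
    show "id \<in> topspace \<sigma> \<rightarrow> topspace \<tau>" using assms(1) by simp
  next
    fix U assume U: "openin \<tau> U"
    have "{x \<in> topspace \<sigma>. id x \<in> U} = U"
      using openin_subset[OF U] assms(1) by auto
    then show "openin \<sigma> {x \<in> topspace \<sigma>. id x \<in> U}" using assms(2)[OF U] by simp
  qed
  have comp: "compactin \<tau> B" if "compactin \<sigma> B" for B
    using image_compactin[OF that cm] by simp
  have hk: "I \<in> HK \<tau>" if "I \<in> HK \<sigma>" for I
    using that comp unfolding HK_def by blast
  have cl: "closedin \<sigma> A" if "closedin \<tau> A" for A
    using that assms(1,2) unfolding closedin_def by auto
  show ?thesis
    unfolding T_ideal_space_def
  proof (intro ballI)
    fix I x assume I: "I \<in> HK \<sigma>" and x: "x \<in> topspace \<sigma> - I"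
    then obtain A where "x \<in> A" "A \<inter> I = {}" "openin \<tau> A \<or> closedin \<tau> A"
      using assms(3) hk[OF I] assms(1) unfolding T_ideal_space_def by metis
    then show "\<exists>A. x \<in> A \<and> A \<inter> I = {} \<and> (openin \<sigma> A \<or> closedin \<sigma> A)"
      using assms(2) cl by blast
  qed
qed

end
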